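(* Let $G$ be a graph, let $D$ be a minimum dominating set of $G$ and $\gamma=|D|$, and let $\nabla$ be an integer with $\nabla>\nabla_1^B(G)$. Let $$\hat D=\{v\in V(G): \text{for all } A\subseteq D\setminus\{v\} \text{ with } N(v)\subseteq N[A] \text{ we have } |A|>2\nabla-1\}$$ and $$D_1=\{v\in V(G): \text{for all } A\subseteq V(G)\setminus\{v\} \text{ with } N(v)\subseteq N[A] \text{ we have } |A|>2\nabla-1\}.$$ Then $D_1\subseteq\hat D$ and $|D_1\setminus D|\le\rho(G)\cdot\gamma$.
   Context: Graphs are finite, undirected and simple. $N(v)$ is the open neighbourhood of $v$, $N[v]=N(v)\cup\{v\}$, and $N[A]=\bigcup_{a\in A}N[a]$. A dominating set is a set $D$ with $N[D]=V(G)$. A graph $H$ is a $1$-shallow minor of $G$ if it is obtained from $G$ by deleting vertices and edges and contracting pairwise vertex-disjoint connected subgraphs of radius at most $1$. $\nabla_1^B(G)$ is the maximum of $|E(H)|/|V(H)|$ over all bipartite $1$-shallow minors $H$ of $G$. The Hall ratio $\rho(G)$ is $\max\{|V(H)|/\alpha(H): H\subseteq G\}$, where $\alpha(H)$ is the size of a largest independent set of $H$. *)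

theory Defs
  imports Complex_Main
begin

definition graph :: "'a set \<Rightarrow> ('a \<Rightarrow> 'a \<Rightarrow> bool) \<Rightarrow> bool" where
  "graph V E \<longleftrightarrow> finite V \<and> (\<forall>x y. E x y \<longrightarrow> x \<in> V \<and> y \<in> V \<and> x \<noteq> y \<and> E y x)"

definition nbhd :: "'a set \<Rightarrow> ('a \<Rightarrow> 'a \<Rightarrow> bool) \<Rightarrow> 'a \<Rightarrow> 'a set" where
  "nbhd V E v = {u \<in> V. E v u}"

definition cnbhd :: "'a set \<Rightarrow> ('a \<Rightarrow> 'a \<Rightarrow> bool) \<Rightarrow> 'a \<Rightarrow> 'a set" where
  "cnbhd V E v = insert v (nbhd V E v)"

definition cnbhd_set :: "'a set \<Rightarrow> ('a \<Rightarrow> 'a \<Rightarrow> bool) \<Rightarrow> 'a set \<Rightarrow> 'a set" where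
  "cnbhd_set V E A = (\<Union>a\<in>A. cnbhd V E a)"

definition dominating :: "'a set \<Rightarrow> ('a \<Rightarrow> 'a \<Rightarrow> bool) \<Rightarrow> 'a set \<Rightarrow> bool" where
  "dominating V E D \<longleftrightarrow> D \<subseteq> V \<and> cnbhd_set V E D = V"

definition min_dominating :: "'a set \<Rightarrow> ('a \<Rightarrow> 'a \<Rightarrow> bool) \<Rightarrow> 'a set \<Rightarrow> bool" where
  "min_dominating V E D \<longleftrightarrow> dominating V E D \<and>
     (\<forall>D'. dominating V E D' \<longrightarrow> card D \<le> card D')"

definition num_edges :: "('a \<Rightarrow> 'a \<Rightarrow> bool) \<Rightarrow> nat" where
  "num_edges F = card {{u, v} | u v. F u v}"

definition bipartite :: "'a set \<Rightarrow> ('a \<Rightarrow> 'a \<Rightarrow> bool) \<Rightarrow> bool" where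
  "bipartite W F \<longleftrightarrow> (\<exists>X Y. X \<union> Y = W \<and> X \<inter> Y = {} \<and>
     (\<forall>x\<in>X. \<forall>x'\<in>X. \<not> F x x') \<and> (\<forall>y\<in>Y. \<forall>y'\<in>Y. \<not> F y y'))"

text \<open>Model of a 1-shallow minor (W,F) of (V,E): each vertex c of the minor is the centre of
  a branch set B c of radius at most 1 around c (so B c is connected, contained in N[c]);
  branch sets are pairwise disjoint; every edge of the minor is witnessed by an edge of G
  between the two branch sets. Vertices of the minor are named by the centres of their
  branch sets (every 1-shallow minor is isomorphic to one of this form).\<close>
definition shallow_minor1 ::
  "'a set \<Rightarrow> ('a \<Rightarrow> 'a \<Rightarrow> bool) \<Rightarrow> 'a set \<Rightarrow> ('a \<Rightarrow> 'a \<Rightarrow> bool) \<Rightarrow> bool" where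
  "shallow_minor1 V E W F \<longleftrightarrow> graph W F \<and> W \<subseteq> V \<and>
     (\<exists>B :: 'a \<Rightarrow> 'a set.
        (\<forall>c\<in>W. c \<in> B c \<and> B c \<subseteq> cnbhd V E c) \<and>
        (\<forall>c\<in>W. \<forall>d\<in>W. c \<noteq> d \<longrightarrow> B c \<inter> B d = {}) \<and>
        (\<forall>c d. F c d \<longrightarrow> (\<exists>x\<in>B c. \<exists>y\<in>B d. E x y)))"

text \<open>nabla_1^B(G): maximum edge density |E(H)|/|V(H)| over bipartite 1-shallow minors H
  (with at least one vertex; 0 if there are none).\<close>
definition nabla1B :: "'a set \<Rightarrow> ('a \<Rightarrow> 'a \<Rightarrow> bool) \<Rightarrow> real" where
  "nabla1B V E = Max (insert 0 {real (num_edges F) / real (card W) | W F.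
      shallow_minor1 V E W F \<and> bipartite W F \<and> W \<noteq> {}})"

definition independent :: "'a set \<Rightarrow> ('a \<Rightarrow> 'a \<Rightarrow> bool) \<Rightarrow> 'a set \<Rightarrow> bool" where
  "independent W F I \<longleftrightarrow> I \<subseteq> W \<and> (\<forall>x\<in>I. \<forall>y\<in>I. \<not> F x y)"

definition alpha :: "'a set \<Rightarrow> ('a \<Rightarrow> 'a \<Rightarrow> bool) \<Rightarrow> nat" where
  "alpha W F = Max {card I | I. independent W F I}"

definition subgraph :: "'a set \<Rightarrow> ('a \<Rightarrow> 'a \<Rightarrow> bool) \<Rightarrow> 'a set \<Rightarrow> ('a \<Rightarrow> 'a \<Rightarrow> bool) \<Rightarrow> bool" where
  "subgraph V E W F \<longleftrightarrow> graph W F \<and> W \<subseteq> V \<and> (\<forall>x y. F x y \<longrightarrow> E x y)"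

definition hall_ratio :: "'a set \<Rightarrow> ('a \<Rightarrow> 'a \<Rightarrow> bool) \<Rightarrow> real" where
  "hall_ratio V E = Max (insert 0 {real (card W) / real (alpha W F) | W F.
      subgraph V E W F \<and> W \<noteq> {}})"

end

theory Submission imports Defs begin

lemma finite_rels:
  assumes "finite V"
  shows "finite {F :: 'a \<Rightarrow> 'a \<Rightarrow> bool. \<forall>x y. F x y \<longrightarrow> x \<in> V \<and> y \<in> V}"
proof (rule finite_subset)
  show "{F :: 'a \<Rightarrow> 'a \<Rightarrow> bool. \<forall>x y. F x y \<longrightarrow> x \<in> V \<and> y \<in> V}
        \<subseteq> (\<lambda>S x y. (x,y) \<in> S) ` Pow (V \<times> V)"
  proof
    fix F :: "'a \<Rightarrow> 'a \<Rightarrow> bool" assume "F \<in> {F. \<forall>x y. F x y \<longrightarrow> x \<in> V \<and> y \<in> V}"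
    hence "{(x,y). F x y} \<in> Pow (V \<times> V)" by auto
    moreover have "F = (\<lambda>x y. (x,y) \<in> {(x,y). F x y})" by auto
    ultimately show "F \<in> (\<lambda>S x y. (x,y) \<in> S) ` Pow (V \<times> V)" by blast
  qed
  show "finite ((\<lambda>S x y. (x,y) \<in> S) ` Pow (V \<times> V))" using assms by simp
qed

lemma hall_fin:
  assumes "graph V E"
  shows "finite {real (card W) / real (alpha W F) | W F. subgraph V E W F \<and> W \<noteq> {}}"
proof -
  have fv: "finite V" using assms by (simp add: graph_def)
  have "{real (card W) / real (alpha W F) | W F. subgraph V E W F \<and> W \<noteq> {}}
     \<subseteq> (\<lambda>(W,F). real (card W) / real (alpha W F)) ` (Pow V \<times> {F. \<forall>x y. F x y \<longrightarrow> x \<in> V \<and> y \<in> V})"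
  proof (rule subsetI)
    fix z assume "z \<in> {real (card W) / real (alpha W F) | W F. subgraph V E W F \<and> W \<noteq> {}}"
    then obtain W F where z: "z = real (card W) / real (alpha W F)" and h: "subgraph V E W F" by blast
    have "(W,F) \<in> Pow V \<times> {F. \<forall>x y. F x y \<longrightarrow> x \<in> V \<and> y \<in> V}"
      using h by (auto simp: subgraph_def graph_def)
    thus "z \<in> (\<lambda>(W,F). real (card W) / real (alpha W F)) ` (Pow V \<times> {F. \<forall>x y. F x y \<longrightarrow> x \<in> V \<and> y \<in> V})"
      using z by (intro rev_image_eqI) auto
  qed
  thus ?thesis by (rule finite_subset) (simp add: fv finite_rels)
qed

lemma hall_ge:
  assumes "graph V E" "subgraph V E W F" "W \<noteq> {}"
  shows "real (card W) / real (alpha W F) \<le> hall_ratio V E"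
  unfolding hall_ratio_def using hall_fin[OF assms(1)] assms by (intro Max_ge) auto

lemma hall_nonneg:
  assumes "graph V E"
  shows "0 \<le> hall_ratio V E"
  unfolding hall_ratio_def using hall_fin[OF assms(1)] by (intro Max_ge) auto

lemma nabla_fin:
  assumes "graph V E"
  shows "finite {real (num_edges F) / real (card W) | W F.
      shallow_minor1 V E W F \<and> bipartite W F \<and> W \<noteq> {}}"
proof -
  have fv: "finite V" using assms by (simp add: graph_def)
  have "{real (num_edges F) / real (card W) | W F.
      shallow_minor1 V E W F \<and> bipartite W F \<and> W \<noteq> {}}
     \<subseteq> (\<lambda>(W,F). real (num_edges F) / real (card W)) ` (Pow V \<times> {F. \<forall>x y. F x y \<longrightarrow> x \<in> V \<and> y \<in> V})"
  proof (rule subsetI)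
    fix z assume "z \<in> {real (num_edges F) / real (card W) | W F.
      shallow_minor1 V E W F \<and> bipartite W F \<and> W \<noteq> {}}"
    then obtain W F where z: "z = real (num_edges F) / real (card W)" and h: "shallow_minor1 V E W F" by blast
    have "(W,F) \<in> Pow V \<times> {F. \<forall>x y. F x y \<longrightarrow> x \<in> V \<and> y \<in> V}"
      using h by (auto simp: shallow_minor1_def graph_def)
    thus "z \<in> (\<lambda>(W,F). real (num_edges F) / real (card W)) ` (Pow V \<times> {F. \<forall>x y. F x y \<longrightarrow> x \<in> V \<and> y \<in> V})"
      using z by (intro rev_image_eqI) auto
  qed
  thus ?thesis by (rule finite_subset) (simp add: fv finite_rels)
qed

lemma nabla_ge:
  assumes "graph V E" "shallow_minor1 V E W F" "bipartite W F" "W \<noteq> {}"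
  shows "real (num_edges F) / real (card W) \<le> nabla1B V E"
  unfolding nabla1B_def using nabla_fin[OF assms(1)] assms by (intro Max_ge) auto

lemma nabla_nonneg:
  assumes "graph V E"
  shows "0 \<le> nabla1B V E"
  unfolding nabla1B_def using nabla_fin[OF assms(1)] by (intro Max_ge) auto

lemma indep_bound:
  assumes G: "graph V E" and Dd: "dominating V E D" and nb: "real_of_int nb > nabla1B V E"
    and IV: "I \<subseteq> V - D" and Iind: "\<forall>x\<in>I. \<forall>y\<in>I. \<not> E x y"
    and ID1: "\<forall>v\<in>I. \<forall>A. A \<subseteq> V - {v} \<and> nbhd V E v \<subseteq> cnbhd_set V E A \<longrightarrow> int (card A) > 2 * nb - 1"
  shows "card I \<le> card D"
proof (cases "I = {}")
  case True thus ?thesis by simp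
next
  case False
  have fv: "finite V" using G by (simp add: graph_def)
  have DV: "D \<subseteq> V" using Dd by (simp add: dominating_def)
  have fD: "finite D" using fv DV finite_subset by blast
  have fI: "finite I" using fv IV finite_subset by blast
  have ID: "I \<inter> D = {}" using IV by blast
  have Esym: "E x y \<Longrightarrow> E y x" for x y using G by (simp add: graph_def)
  have EV: "E x y \<Longrightarrow> x \<in> V \<and> y \<in> V \<and> x \<noteq> y" for x y using G by (simp add: graph_def)
  define g where "g u = (if u \<in> D then u else (SOME d. d \<in> D \<and> E d u))" for u
  have g: "g u \<in> D \<and> (g u = u \<or> E (g u) u)" if "u \<in> V" for u
  proof (cases "u \<in> D")
    case True thus ?thesis by (simp add: g_def)
  next
    case False
    have "u \<in> cnbhd_set V E D" using Dd that by (simp add: dominating_def)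
    then obtain d where "d \<in> D" "u \<in> cnbhd V E d" by (auto simp: cnbhd_set_def)
    hence "\<exists>d. d \<in> D \<and> E d u" using False by (auto simp: cnbhd_def nbhd_def)
    hence "(SOME d. d \<in> D \<and> E d u) \<in> D \<and> E (SOME d. d \<in> D \<and> E d u) u" by (rule someI_ex)
    thus ?thesis using False by (simp add: g_def)
  qed
  define N where "N v = g ` nbhd V E v" for v
  have ND: "N v \<subseteq> D" for v using g by (auto simp: N_def nbhd_def)
  have fN: "finite (N v)" for v using ND fD finite_subset by blast
  have Ncard: "2 * nb \<le> int (card (N v))" if "v \<in> I" for v
  proof -
    have "N v \<subseteq> V - {v}" using ND DV that IV by blast
    moreover have "nbhd V E v \<subseteq> cnbhd_set V E (N v)"
    proof
      fix u assume u: "u \<in> nbhd V E v"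
      hence "u \<in> V" by (simp add: nbhd_def)
      hence "u \<in> cnbhd V E (g u)" using g[of u] by (auto simp: cnbhd_def nbhd_def)
      thus "u \<in> cnbhd_set V E (N v)" using u by (auto simp: cnbhd_set_def N_def)
    qed
    ultimately have "int (card (N v)) > 2 * nb - 1" using ID1 that by blast
    thus ?thesis by simp
  qed
  define W where "W = I \<union> D"
  define F where "F x y = ((x \<in> I \<and> y \<in> N x) \<or> (y \<in> I \<and> x \<in> N y))" for x y
  define B where "B c = (if c \<in> D then {u \<in> V - I. g u = c} else {c})" for c
  have gr: "graph W F"
    unfolding graph_def W_def F_def using fI fD ND ID by blast
  have WV: "W \<subseteq> V" using IV DV W_def by blast
  have sm: "shallow_minor1 V E W F"
    unfolding shallow_minor1_def
  proof (intro conjI gr WV exI[of _ B])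
    show "\<forall>c\<in>W. c \<in> B c \<and> B c \<subseteq> cnbhd V E c"
    proof
      fix c assume c: "c \<in> W"
      show "c \<in> B c \<and> B c \<subseteq> cnbhd V E c"
      proof (cases "c \<in> D")
        case True
        have "c \<in> B c" using True DV ID by (auto simp: B_def g_def)
        moreover have "B c \<subseteq> cnbhd V E c"
        proof
          fix u assume "u \<in> B c"
          hence "u \<in> V" "g u = c" using True by (auto simp: B_def)
          thus "u \<in> cnbhd V E c" using g[of u] by (auto simp: cnbhd_def nbhd_def)
        qed
        ultimately show ?thesis by blast
      qed (auto simp: B_def cnbhd_def)
    qed
    show "\<forall>c\<in>W. \<forall>d\<in>W. c \<noteq> d \<longrightarrow> B c \<inter> B d = {}"
      unfolding W_def B_def by auto
    show "\<forall>c d. F c d \<longrightarrow> (\<exists>x\<in>B c. \<exists>y\<in>B d. E x y)"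
    proof (intro allI impI)
      fix c d assume "F c d"
      hence "(c \<in> I \<and> d \<in> N c) \<or> (d \<in> I \<and> c \<in> N d)" by (simp add: F_def)
      thus "\<exists>x\<in>B c. \<exists>y\<in>B d. E x y"
      proof
        assume h: "c \<in> I \<and> d \<in> N c"
        then obtain u where u: "u \<in> nbhd V E c" "d = g u" by (auto simp: N_def)
        have Ecu: "E c u" "u \<in> V" using u by (auto simp: nbhd_def)
        have "u \<notin> I" using Iind h Ecu by blast
        hence "u \<in> B d" using u Ecu g[of u] by (auto simp: B_def)
        moreover have "c \<in> B c" using h ID by (auto simp: B_def)
        ultimately show ?thesis using Ecu by blast
      next
        assume h: "d \<in> I \<and> c \<in> N d"
        then obtain u where u: "u \<in> nbhd V E d" "c = g u" by (auto simp: N_def)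
        have Ecu: "E d u" "u \<in> V" using u by (auto simp: nbhd_def)
        have "u \<notin> I" using Iind h Ecu by blast
        hence "u \<in> B c" using u Ecu g[of u] by (auto simp: B_def)
        moreover have "d \<in> B d" using h ID by (auto simp: B_def)
        ultimately show ?thesis using Ecu Esym by blast
      qed
    qed
  qed
  have bp: "bipartite W F"
    unfolding bipartite_def
    by (rule exI[of _ I], rule exI[of _ D]) (use ID ND in \<open>auto simp: W_def F_def\<close>)
  have Wne: "W \<noteq> {}" using False W_def by blast
  have ratio: "real (num_edges F) / real (card W) < real_of_int nb"
    using nabla_ge[OF G sm bp Wne] nb by linarith
  have nbpos: "0 < nb" using nabla_nonneg[OF G] nb by linarith
  have cW: "card W \<le> card I + card D" unfolding W_def by (rule card_Un_le)
  have cWpos: "0 < card W" using Wne fI fD W_def by (simp add: card_gt_0_iff)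
  have fE: "finite {{u, v} | u v. F u v}"
  proof (rule finite_subset)
    show "{{u, v} | u v. F u v} \<subseteq> (\<lambda>(u,v). {u,v}) ` (W \<times> W)"
      using gr by (auto simp: graph_def)
    show "finite ((\<lambda>(u,v). {u,v}) ` (W \<times> W))" using fI fD W_def by simp
  qed
  have inj: "inj_on (\<lambda>(v,d). {v,d}) (Sigma I N)"
  proof (rule inj_onI)
    fix p q assume p: "p \<in> Sigma I N" and q: "q \<in> Sigma I N"
      and e: "(\<lambda>(v,d). {v,d}) p = (\<lambda>(v,d). {v,d}) q"
    obtain v d where pv: "p = (v,d)" by (cases p)
    obtain v' d' where qv: "q = (v',d')" by (cases q)
    have "v \<in> I" "v' \<in> I" "d \<in> D" "d' \<in> D" using p q pv qv ND by auto
    thus "p = q" using e pv qv ID by (auto simp: doubleton_eq_iff)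
  qed
  have sub: "(\<lambda>(v,d). {v,d}) ` (Sigma I N) \<subseteq> {{u, v} | u v. F u v}"
    by (auto simp: F_def)
  have "card (Sigma I N) \<le> num_edges F"
    unfolding num_edges_def using card_inj_on_le[OF inj sub fE] .
  moreover have "card (Sigma I N) = (\<Sum>v\<in>I. card (N v))"
    using fI fN by (simp add: card_SigmaI)
  moreover have "(\<Sum>v\<in>I. int (card (N v))) \<ge> (\<Sum>v\<in>I. 2 * nb)"
    using Ncard by (intro sum_mono) auto
  ultimately have edges: "2 * nb * int (card I) \<le> int (num_edges F)"
  proof -
    assume a1: "card (Sigma I N) \<le> num_edges F" and a2: "card (Sigma I N) = (\<Sum>v\<in>I. card (N v))"
      and a3: "(\<Sum>v\<in>I. int (card (N v))) \<ge> (\<Sum>v\<in>I. 2 * nb)"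
    have "(\<Sum>v\<in>I. 2 * nb) = 2 * nb * int (card I)" by simp
    moreover have "(\<Sum>v\<in>I. int (card (N v))) = int (card (Sigma I N))" using a2 by simp
    ultimately show ?thesis using a1 a3 by linarith
  qed
  have l1: "real (num_edges F) < real_of_int nb * real (card W)"
    using ratio cWpos by (simp add: divide_less_eq)
  have l2: "real_of_int nb * real (card W) \<le> real_of_int nb * (real (card I) + real (card D))"
    using cW nbpos by (intro mult_left_mono) auto
  have "real_of_int (2 * nb * int (card I)) \<le> real_of_int (int (num_edges F))"
    using edges of_int_le_iff by blast
  hence l3: "2 * real_of_int nb * real (card I) \<le> real (num_edges F)" by simp
  have "2 * real_of_int nb * real (card I) < real_of_int nb * (real (card I) + real (card D))"
    using l1 l2 l3 by linarith
  hence "real_of_int nb * real (card I) < real_of_int nb * real (card D)"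
    by (simp add: algebra_simps)
  hence "real (card I) < real (card D)" using nbpos
    by (simp add: mult_less_cancel_left)
  thus ?thesis by simp
qed

theorem lemma4:
  fixes V :: "'a set" and E :: "'a \<Rightarrow> 'a \<Rightarrow> bool" and D :: "'a set" and nb :: int
  assumes "graph V E"
    and "min_dominating V E D"
    and "real_of_int nb > nabla1B V E"
  shows "{v \<in> V. \<forall>A. A \<subseteq> V - {v} \<and> nbhd V E v \<subseteq> cnbhd_set V E A \<longrightarrow> int (card A) > 2 * nb - 1}
           \<subseteq> {v \<in> V. \<forall>A. A \<subseteq> D - {v} \<and> nbhd V E v \<subseteq> cnbhd_set V E A \<longrightarrow> int (card A) > 2 * nb - 1}
       \<and> real (card ({v \<in> V. \<forall>A. A \<subseteq> V - {v} \<and> nbhd V E v \<subseteq> cnbhd_set V E A \<longrightarrow> int (card A) > 2 * nb - 1} - D))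
           \<le> hall_ratio V E * real (card D)"
proof -
  define D1 where "D1 = {v \<in> V. \<forall>A. A \<subseteq> V - {v} \<and> nbhd V E v \<subseteq> cnbhd_set V E A \<longrightarrow> int (card A) > 2 * nb - 1}"
  have Dd: "dominating V E D" using assms(2) by (simp add: min_dominating_def)
  have DV: "D \<subseteq> V" using Dd by (simp add: dominating_def)
  have fv: "finite V" using assms(1) by (simp add: graph_def)
  have part1: "D1 \<subseteq> {v \<in> V. \<forall>A. A \<subseteq> D - {v} \<and> nbhd V E v \<subseteq> cnbhd_set V E A \<longrightarrow> int (card A) > 2 * nb - 1}"
  proof
    fix v assume "v \<in> D1"
    thus "v \<in> {v \<in> V. \<forall>A. A \<subseteq> D - {v} \<and> nbhd V E v \<subseteq> cnbhd_set V E A \<longrightarrow> int (card A) > 2 * nb - 1}"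
      unfolding D1_def using DV by blast
  qed
  define W0 where "W0 = D1 - D"
  define F0 where "F0 x y = (E x y \<and> x \<in> W0 \<and> y \<in> W0)" for x y
  have W0V: "W0 \<subseteq> V" unfolding W0_def D1_def by blast
  have fW0: "finite W0" using W0V fv finite_subset by blast
  have part2: "real (card W0) \<le> hall_ratio V E * real (card D)"
  proof (cases "W0 = {}")
    case True thus ?thesis using hall_nonneg[OF assms(1)] by simp
  next
    case False
    have sg: "subgraph V E W0 F0"
      unfolding subgraph_def graph_def F0_def using fW0 W0V assms(1) by (auto simp: graph_def)
    let ?S = "{card I | I. independent W0 F0 I}"
    have fS: "finite ?S"
    proof (rule finite_subset)
      show "?S \<subseteq> card ` Pow W0" by (auto simp: independent_def)
      show "finite (card ` Pow W0)" using fW0 by simp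
    qed
    obtain x where x: "x \<in> W0" using False by blast
    have "\<not> E x x" using assms(1) by (auto simp: graph_def)
    hence "independent W0 F0 {x}" using x by (simp add: independent_def F0_def)
    hence "card {x} \<in> ?S" by blast
    hence a1: "1 \<le> alpha W0 F0" unfolding alpha_def using fS Max_ge by fastforce
    have a2: "alpha W0 F0 \<le> card D"
      unfolding alpha_def
    proof (rule Max.boundedI[OF fS])
      show "?S \<noteq> {}" using \<open>card {x} \<in> ?S\<close> by blast
      fix k assume "k \<in> ?S"
      then obtain I where k: "k = card I" and I: "independent W0 F0 I" by blast
      have IW: "I \<subseteq> W0" using I by (simp add: independent_def)
      show "k \<le> card D" unfolding k
      proof (rule indep_bound[OF assms(1) Dd assms(3)])
        show "I \<subseteq> V - D" using IW W0V W0_def by blast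
        show "\<forall>x\<in>I. \<forall>y\<in>I. \<not> E x y" using I IW by (auto simp: independent_def F0_def)
        show "\<forall>v\<in>I. \<forall>A. A \<subseteq> V - {v} \<and> nbhd V E v \<subseteq> cnbhd_set V E A \<longrightarrow> int (card A) > 2 * nb - 1"
          using IW unfolding W0_def D1_def by blast
      qed
    qed
    have "real (card W0) / real (alpha W0 F0) \<le> hall_ratio V E"
      using hall_ge[OF assms(1) sg False] .
    hence "real (card W0) \<le> hall_ratio V E * real (alpha W0 F0)"
      using a1 by (simp add: divide_le_eq)
    also have "\<dots> \<le> hall_ratio V E * real (card D)"
      using a2 hall_nonneg[OF assms(1)] by (intro mult_left_mono) auto
    finally show ?thesis .
  qed
  show ?thesis using part1 part2 unfolding D1_def W0_def by blast
qed

end
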